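(* Let ${\bf a} = (a_1,\ldots,a_n, -\sum_i a_i)$ and ${\bf c} = (c_1,\ldots,c_n)$ be tuples of nonnegative integers $a_i$ and $c_i$. Then the volume and lattice points of the flow polytope $\mathcal{F}_{\Pi_n({\bf c})}({\bf a})$ equal \begin{align*} {\rm vol}\, \mathcal{F}_{\Pi_n({\bf c})}({\bf a}) &= \sum_{\bf j} \binom{c_1+\cdots + c_n}{j_1,\ldots,j_n} a_1^{j_1}\cdots a_n^{j_n},\\ K_{\Pi_n({\bf c})}({\bf a}) &= \sum_{\bf j} \binom{a_1+c_1}{j_1}\cdots \binom{a_n+c_n}{j_n},\\ &= \sum_{\bf j} \binom{a_1+j_1}{j_1}\binom{a_2+j_2-1}{j_2}\cdots \binom{a_{n}+j_n-1}{j_{n}}, \end{align*} where the three sums are over weak compositions ${\bf j}=(j_1,\ldots,j_n)$ of $\sum_i c_i$ that are $\geq (c_1,\ldots,c_n)$ in dominance order.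
   Context: For ${\bf c} = (c_1,\ldots,c_n)$ of nonnegative integers, $\Pi_n({\bf c})$ is the graph with vertices $[n+1]$ consisting of the directed path $1\to 2 \to \cdots \to n+1$ together with $c_i$ multiple edges $(i,n+1)$ for each $i$. For a graph $G$ on $[n+1]$ with edges directed $i\to j$ ($i<j$), the flow polytope $\mathcal{F}_G({\bf a})$ is the set of nonnegative real edge flows such that at each vertex $i\le n$ the outgoing flow minus incoming flow equals $a_i$; ${\rm vol}$ denotes normalized volume; and $K_G({\bf a})$ is the Kostant partition function, the number of nonnegative integer flows on $G$ with netflow ${\bf a}$ (i.e. the number of lattice points of $\mathcal{F}_G({\bf a})$). *)

theory Defs
  imports "HOL-Analysis.Analysis"
begin

text \<open>A directed multigraph on vertices 1..n+1 is a list of edges (i,j); edge number k is G!k.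
  The graph Pi_n(c): path edges (i,i+1), i=1..n (indices 0..n-1), followed by c_i copies of (i,n+1)
  for i=1..n (indices n..n+C-1, C = c_1+...+c_n).\<close>
definition Pi_graph :: "nat \<Rightarrow> (nat \<Rightarrow> nat) \<Rightarrow> (nat \<times> nat) list" where
  "Pi_graph n c = map (\<lambda>i. (i, Suc i)) [1..<n+1]
                  @ concat (map (\<lambda>i. replicate (c i) (i, n+1)) [1..<n+1])"

definition flow_polytope :: "nat \<Rightarrow> (nat \<times> nat) list \<Rightarrow> (nat \<Rightarrow> real) \<Rightarrow> (nat \<Rightarrow> real) set" where
  "flow_polytope n G a = {f. (\<forall>k. length G \<le> k \<longrightarrow> f k = 0) \<and> (\<forall>k<length G. 0 \<le> f k) \<and>
     (\<forall>i\<in>{1..n}. (\<Sum>k\<in>{k. k < length G \<and> fst (G!k) = i}. f k)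
                 - (\<Sum>k\<in>{k. k < length G \<and> snd (G!k) = i}. f k) = a i)}"

definition kostant :: "nat \<Rightarrow> (nat \<times> nat) list \<Rightarrow> (nat \<Rightarrow> int) \<Rightarrow> nat" where
  "kostant n G a = card {f :: nat \<Rightarrow> nat. (\<forall>k. length G \<le> k \<longrightarrow> f k = 0) \<and>
     (\<forall>i\<in>{1..n}. int (\<Sum>k\<in>{k. k < length G \<and> fst (G!k) = i}. f k)
                 - int (\<Sum>k\<in>{k. k < length G \<and> snd (G!k) = i}. f k) = a i)}"

text \<open>Normalized volume of a polytope P whose coordinate projection onto the index set S
  is a lattice-preserving affine bijection onto a full-dimensional body in R^S:
  (card S)! times the Lebesgue measure of the projection.\<close>
definition norm_vol_proj :: "nat set \<Rightarrow> (nat \<Rightarrow> real) set \<Rightarrow> real" where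
  "norm_vol_proj S P = fact (card S) * measure (Pi\<^sub>M S (\<lambda>_. lborel)) ((\<lambda>f. restrict f S) ` P)"

text \<open>Normalized volume of F_{Pi_n(c)}(a): projection onto the multi-edge coordinates
  (the path-edge flows are integral affine functions of these).\<close>
definition vol_Pi_flow :: "nat \<Rightarrow> (nat \<Rightarrow> nat) \<Rightarrow> (nat \<Rightarrow> real) \<Rightarrow> real" where
  "vol_Pi_flow n c a = norm_vol_proj {n..<n + sum c {1..n}} (flow_polytope n (Pi_graph n c) a)"

definition dom_compositions :: "nat \<Rightarrow> (nat \<Rightarrow> nat) \<Rightarrow> (nat \<Rightarrow> nat) set" where
  "dom_compositions n c = {j \<in> {1..n} \<rightarrow>\<^sub>E {0..sum c {1..n}}. sum j {1..n} = sum c {1..n} \<and>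
     (\<forall>k\<in>{1..n}. sum c {1..k} \<le> sum j {1..k})}"

end

theory Submission
  imports Defs "HOL-Computational_Algebra.Formal_Power_Series"
begin

definition Dc :: "nat \<Rightarrow> nat \<Rightarrow> (nat \<Rightarrow> nat) \<Rightarrow> (nat \<Rightarrow> nat) set" where
  "Dc k n c = {j \<in> {k..n} \<rightarrow>\<^sub>E {0..sum c {k..n}}. sum j {k..n} = sum c {k..n} \<and>
     (\<forall>m\<in>{k..n}. sum c {k..m} \<le> sum j {k..m})}"

lemma Dc_alt: "Dc k n c = {j \<in> {k..n} \<rightarrow>\<^sub>E UNIV. sum j {k..n} = sum c {k..n} \<and>
     (\<forall>m\<in>{k..n}. sum c {k..m} \<le> sum j {k..m})}"
proof -
  have "j i \<le> sum j {k..n}" if "i \<in> {k..n}" for j :: "nat \<Rightarrow> nat" and i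
    using that by (intro member_le_sum) auto
  then show ?thesis unfolding Dc_def by (auto simp: PiE_def Pi_def) (metis)
qed

lemma finite_Dc: "finite (Dc k n c)"
proof -
  have "Dc k n c \<subseteq> {k..n} \<rightarrow>\<^sub>E {0..sum c {k..n}}" unfolding Dc_def by auto
  thus ?thesis by (rule finite_subset) (intro finite_PiE, auto)
qed

lemma Dc_base:
  assumes "c n = 0"
  shows "Dc n n c = {(\<lambda>_. undefined)(n := 0)}"
  using assms unfolding Dc_alt by (auto simp: PiE_def extensional_def fun_eq_iff)

lemma Dc_bijA:
  assumes "k \<le> n" "c k \<ge> 1"
  shows "bij_betw (\<lambda>j. j(k := Suc (j k))) (Dc k n (c(k := c k - 1))) (Dc k n c)"
proof (rule bij_betw_byWitness[where f' = "\<lambda>j. j(k := j k - 1)"])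
  let ?c' = "c(k := c k - 1)"
  have sc: "sum ?c' {k..m} + 1 = sum c {k..m}" if "m \<in> {k..n}" for m
  proof -
    have "sum ?c' {k..m} = sum ?c' (insert k {Suc k..m})" using that by (simp add: Icc_eq_insert_lb_nat)
    also have "\<dots> = ?c' k + sum c {Suc k..m}" by (subst sum.insert) (auto intro!: sum.cong)
    also have "sum c {k..m} = c k + sum c {Suc k..m}" using that by (simp add: Icc_eq_insert_lb_nat)
    ultimately show ?thesis using assms by simp
  qed
  have sj: "sum (j(k := x)) {k..m} = x + sum j {Suc k..m}" if "m \<in> {k..n}" for m x and j :: "nat \<Rightarrow> nat"
  proof -
    have "sum (j(k := x)) {k..m} = sum (j(k := x)) (insert k {Suc k..m})" using that by (simp add: Icc_eq_insert_lb_nat)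
    also have "\<dots> = x + sum j {Suc k..m}" by (subst sum.insert) (auto intro!: sum.cong)
    finally show ?thesis .
  qed
  have sj0: "sum j {k..m} = j k + sum j {Suc k..m}" if "m \<in> {k..n}" for m and j :: "nat \<Rightarrow> nat"
    using that by (simp add: Icc_eq_insert_lb_nat)
  show "\<forall>a\<in>Dc k n ?c'. (\<lambda>j. j(k := j k - 1)) ((\<lambda>j. j(k := Suc (j k))) a) = a" by auto
  show "\<forall>a\<in>Dc k n c. (\<lambda>j. j(k := Suc (j k))) ((\<lambda>j. j(k := j k - 1)) a) = a"
  proof
    fix j assume j: "j \<in> Dc k n c"
    have "c k \<le> j k"
    proof -
      have "\<forall>m\<in>{k..n}. sum c {k..m} \<le> sum j {k..m}" using j unfolding Dc_alt by auto
      then have "sum c {k..k} \<le> sum j {k..k}" using assms by (intro bspec[of _ _ k]) auto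
      thus ?thesis by simp
    qed
    thus "(\<lambda>j. j(k := Suc (j k))) ((\<lambda>j. j(k := j k - 1)) j) = j" using assms by auto
  qed
  show "(\<lambda>j. j(k := Suc (j k))) ` Dc k n ?c' \<subseteq> Dc k n c"
  proof safe
    fix j assume j: "j \<in> Dc k n ?c'"
    show "j(k := Suc (j k)) \<in> Dc k n c" unfolding Dc_alt mem_Collect_eq
    proof (intro conjI ballI)
      show "j(k := Suc (j k)) \<in> {k..n} \<rightarrow>\<^sub>E UNIV" using j assms unfolding Dc_alt by (auto simp: PiE_def extensional_def)
      have "sum j {k..n} = sum ?c' {k..n}" using j unfolding Dc_alt by auto
      thus "sum (j(k := Suc (j k))) {k..n} = sum c {k..n}"
        using sj[where m=n and x="Suc (j k)" and j=j] sj0[where m=n and j=j] sc[of n] assms by auto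
      fix m assume m: "m \<in> {k..n}"
      have "sum ?c' {k..m} \<le> sum j {k..m}" using j m unfolding Dc_alt by auto
      thus "sum c {k..m} \<le> sum (j(k := Suc (j k))) {k..m}"
        using sj[where m=m and x="Suc (j k)" and j=j] sj0[where m=m and j=j] sc[of m] m by auto
    qed
  qed
  show "(\<lambda>j. j(k := j k - 1)) ` Dc k n c \<subseteq> Dc k n ?c'"
  proof safe
    fix j assume j: "j \<in> Dc k n c"
    have jk: "c k \<le> j k"
    proof -
      have "\<forall>m\<in>{k..n}. sum c {k..m} \<le> sum j {k..m}" using j unfolding Dc_alt by auto
      then have "sum c {k..k} \<le> sum j {k..k}" using assms by (intro bspec[of _ _ k]) auto
      thus ?thesis by simp
    qed
    show "j(k := j k - 1) \<in> Dc k n ?c'" unfolding Dc_alt mem_Collect_eq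
    proof (intro conjI ballI)
      show "j(k := j k - 1) \<in> {k..n} \<rightarrow>\<^sub>E UNIV" using j assms unfolding Dc_alt by (auto simp: PiE_def extensional_def)
      have "sum j {k..n} = sum c {k..n}" using j unfolding Dc_alt by auto
      thus "sum (j(k := j k - 1)) {k..n} = sum ?c' {k..n}"
        using sj[where m=n and x="j k - 1" and j=j] sj0[where m=n and j=j] sc[of n] assms jk by auto
      fix m assume m: "m \<in> {k..n}"
      have "sum c {k..m} \<le> sum j {k..m}" using j m unfolding Dc_alt by auto
      thus "sum ?c' {k..m} \<le> sum (j(k := j k - 1)) {k..m}"
        using sj[where m=m and x="j k - 1" and j=j] sj0[where m=m and j=j] sc[of m] m jk assms by auto
    qed
  qed
qed

lemma sum_split_lb: "k \<le> m \<Longrightarrow> sum (f::nat\<Rightarrow>'a::comm_monoid_add) {k..m} = f k + sum f {Suc k..m}"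
  by (simp add: Icc_eq_insert_lb_nat)

lemma Dc_bijB:
  assumes "k < n" "c k = 0"
  shows "bij_betw (\<lambda>(j,p). j(k := p, Suc k := j (Suc k) - p))
           (SIGMA j:Dc (Suc k) n c. {0..j (Suc k)}) (Dc k n c)"
proof (rule bij_betw_byWitness[where f' = "\<lambda>j. (j(k := undefined, Suc k := j k + j (Suc k)), j k)"])
  have cs: "sum c {k..m} = sum c {Suc k..m}" if "k \<le> m" for m
    using sum_split_lb[OF that, of c] assms by simp
  have js: "sum J {k..m} = J k + J (Suc k) + sum J {Suc (Suc k)..m}" if "Suc k \<le> m" for m and J :: "nat \<Rightarrow> nat"
    using sum_split_lb[of k m J] sum_split_lb[of "Suc k" m J] that by simp
  have js1: "sum J {Suc k..m} = J (Suc k) + sum J {Suc (Suc k)..m}" if "Suc k \<le> m" for m and J :: "nat \<Rightarrow> nat"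
    using sum_split_lb[of "Suc k" m J] that by simp
  have upd: "sum (J(k := x, Suc k := y)) {Suc (Suc k)..m} = sum J {Suc (Suc k)..m}" for m x y and J :: "nat \<Rightarrow> nat"
    by (intro sum.cong) auto
  have upd2: "sum (J(k := x)) {Suc (Suc k)..m} = sum J {Suc (Suc k)..m}" for m x and J :: "nat \<Rightarrow> nat"
    by (intro sum.cong) auto
  show "\<forall>a\<in>SIGMA j:Dc (Suc k) n c. {0..j (Suc k)}.
     (\<lambda>j. (j(k := undefined, Suc k := j k + j (Suc k)), j k)) ((\<lambda>(j,p). j(k := p, Suc k := j (Suc k) - p)) a) = a"
    by (auto simp: fun_eq_iff Dc_alt PiE_def extensional_def)
  show "\<forall>a\<in>Dc k n c. (\<lambda>(j,p). j(k := p, Suc k := j (Suc k) - p)) ((\<lambda>j. (j(k := undefined, Suc k := j k + j (Suc k)), j k)) a) = a"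
    by (auto simp: fun_eq_iff)
  show "(\<lambda>(j,p). j(k := p, Suc k := j (Suc k) - p)) ` (SIGMA j:Dc (Suc k) n c. {0..j (Suc k)}) \<subseteq> Dc k n c"
  proof safe
    fix j p assume j: "j \<in> Dc (Suc k) n c" and p: "p \<in> {0..j (Suc k)}"
    let ?J = "j(k := p, Suc k := j (Suc k) - p)"
    have J: "?J k + ?J (Suc k) = j (Suc k)" using p by auto
    show "?J \<in> Dc k n c"
      unfolding Dc_alt mem_Collect_eq
    proof (intro conjI ballI)
      show "?J \<in> {k..n} \<rightarrow>\<^sub>E UNIV" using j assms unfolding Dc_alt by (auto simp: PiE_def extensional_def)
      have "sum j {Suc k..n} = sum c {Suc k..n}" using j unfolding Dc_alt by auto
      thus "sum ?J {k..n} = sum c {k..n}"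
        using js[where m=n and J="?J"] js1[where m=n and J=j] cs[of n] upd[where x=p and J=j and m=n] J assms by simp
      fix m assume m: "m \<in> {k..n}"
      show "sum c {k..m} \<le> sum ?J {k..m}"
      proof (cases "m = k")
        case True thus ?thesis using assms by simp
      next
        case False
        hence m1: "Suc k \<le> m" using m by auto
        have "sum c {Suc k..m} \<le> sum j {Suc k..m}" using j m1 m unfolding Dc_alt by auto
        thus ?thesis using js[where m=m and J="?J"] js1[where m=m and J=j] cs[of m] upd[where x=p and J=j and m=m] J m1 by simp
      qed
    qed
  qed
  show "(\<lambda>j. (j(k := undefined, Suc k := j k + j (Suc k)), j k)) ` Dc k n c \<subseteq> (SIGMA j:Dc (Suc k) n c. {0..j (Suc k)})"
  proof safe
    fix j assume j: "j \<in> Dc k n c"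
    let ?J = "j(k := undefined, Suc k := j k + j (Suc k))"
    show "j k \<in> {0..?J (Suc k)}" by simp
    show "?J \<in> Dc (Suc k) n c"
      unfolding Dc_alt mem_Collect_eq
    proof (intro conjI ballI)
      show "?J \<in> {Suc k..n} \<rightarrow>\<^sub>E UNIV" using j assms unfolding Dc_alt by (auto simp: PiE_def extensional_def)
      have "sum j {k..n} = sum c {k..n}" using j unfolding Dc_alt by auto
      thus "sum ?J {Suc k..n} = sum c {Suc k..n}"
        using js[where m=n and J=j] js1[where m=n and J="?J"] cs[of n] upd[where x=undefined and J=j and m=n] assms by simp
      fix m assume m: "m \<in> {Suc k..n}"
      have "sum c {k..m} \<le> sum j {k..m}" using j m unfolding Dc_alt by auto
      thus "sum c {Suc k..m} \<le> sum ?J {Suc k..m}"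
        using js[where m=m and J=j] js1[where m=m and J="?J"] cs[of m] upd[where x=undefined and J=j and m=m] m by simp
    qed
  qed
qed

lemma choose_neg1: "real ((x + p) choose p) = (-1)^p * ((- (real x + 1)) gchoose p)"
proof -
  have "(- (real x + 1)) gchoose p = (-1)^p * ((real x + 1) + of_nat p - 1 gchoose p)"
    by (rule gbinomial_minus)
  also have "(real x + 1) + of_nat p - 1 = real (x + p)" by simp
  also have "real (x+p) gchoose p = real ((x + p) choose p)" by (simp add: binomial_gbinomial)
  finally have "(- (real x + 1)) gchoose p = (-1)^p * real ((x + p) choose p)" .
  then have "(-1)^p * ((- (real x + 1)) gchoose p) = ((-1)^p * (-1)^p) * real ((x + p) choose p)" by simp
  also have "(-1::real)^p * (-1)^p = 1" by (simp add: power_add[symmetric] power_mult[symmetric] mult_2[symmetric])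
  finally show ?thesis by simp
qed

lemma choose_neg2: "real ((y + q - 1) choose q) = (-1)^q * ((- real y) gchoose q)"
proof (cases "y + q = 0")
  case True thus ?thesis by simp
next
  case False
  have "(- real y) gchoose q = (-1)^q * (real y + of_nat q - 1 gchoose q)"
    by (rule gbinomial_minus)
  also have "real y + of_nat q - 1 = real (y + q - 1)"
  proof -
    have "1 \<le> y + q" using False by arith
    then have "real (y + q - 1) = real (y + q) - 1" by (simp only: of_nat_diff)
    thus ?thesis by simp
  qed
  also have "real (y + q - 1) gchoose q = real ((y + q - 1) choose q)" by (simp add: binomial_gbinomial)
  finally have "(- real y) gchoose q = (-1)^q * real ((y + q - 1) choose q)" .
  then have "(-1)^q * ((- real y) gchoose q) = ((-1)^q * (-1)^q) * real ((y + q - 1) choose q)" by simp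
  also have "(-1::real)^q * (-1)^q = 1" by (simp add: power_add[symmetric] power_mult[symmetric] mult_2[symmetric])
  finally show ?thesis by simp
qed

lemma multichoose_vandermonde:
  "(\<Sum>p\<in>{0..m}. ((x + p) choose p) * ((y + (m - p) - 1) choose (m - p))) = (x + y + m) choose m"
proof -
  have "real (\<Sum>p\<in>{0..m}. ((x + p) choose p) * ((y + (m - p) - 1) choose (m - p)))
      = (\<Sum>p\<in>{0..m}. (-1)^m * (((- (real x + 1)) gchoose p) * ((- real y) gchoose (m - p))))"
    unfolding of_nat_sum of_nat_mult choose_neg1 choose_neg2
    by (intro sum.cong) (auto simp: power_add[symmetric])
  also have "\<dots> = (-1)^m * ((- (real x + 1)) + (- real y) gchoose m)"
    by (simp add: sum_distrib_left[symmetric] gbinomial_Vandermonde)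
  also have "(- (real x + 1)) + (- real y) = - (real x + real y + 1)" by simp
  also have "(-1)^m * (- (real x + real y + 1) gchoose m) = real ((x + y + m) choose m)"
    using choose_neg1[of "x+y" m] by (simp add: add.assoc)
  finally show ?thesis by (simp only: of_nat_eq_iff)
qed

lemma multichoose_vandermonde':
  "(\<Sum>p\<in>{0..m}. ((x + p) choose p) * ((y + m - Suc p) choose (m - p))) = (x + y + m) choose m"
proof -
  have "(\<Sum>p\<in>{0..m}. ((x + p) choose p) * ((y + m - Suc p) choose (m - p)))
      = (\<Sum>p\<in>{0..m}. ((x + p) choose p) * ((y + (m - p) - 1) choose (m - p)))"
    by (intro sum.cong refl) (simp add: Suc_diff_le)
  thus ?thesis using multichoose_vandermonde by simp
qed

lemma exp_binomial_fact:
  fixes x y :: real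
  shows "(x + y) ^ m / fact m = (\<Sum>p\<in>{0..m}. x ^ p / fact p * (y ^ (m - p) / fact (m - p)))"
proof -
  have "(x + y) ^ m = (\<Sum>p\<le>m. of_nat (m choose p) * x ^ p * y ^ (m - p))" by (rule binomial_ring)
  also have "\<dots> / fact m = (\<Sum>p\<le>m. x ^ p / fact p * (y ^ (m - p) / fact (m - p)))"
    unfolding sum_divide_distrib
    by (intro sum.cong refl) (simp add: binomial_fact field_simps)
  finally show ?thesis by (simp add: atLeast0AtMost)
qed

lemma sum_choose_A2:
  assumes "b \<le> j"
  shows "(\<Sum>t\<in>{0..a}. (a - t + b) choose j) = (a + b + 1) choose (Suc j)"
proof -
  have "(\<Sum>t\<in>{0..a}. (a - t + b) choose j) = (\<Sum>s\<in>{0..a}. (s + b) choose j)"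
    by (rule sum.reindex_bij_witness[where i="\<lambda>s. a - s" and j="\<lambda>t. a - t"]) auto
  also have "\<dots> = (a + b + 1) choose (Suc j)"
  proof (induction a)
    case 0 thus ?case using assms by simp
  next
    case (Suc a) thus ?case by simp
  qed
  finally show ?thesis .
qed

lemma sum_choose_A3:
  "(\<Sum>t\<in>{0..a}. (a - t + x) choose x) = (a + Suc x) choose (Suc x)"
proof -
  have "(\<Sum>t\<in>{0..a}. (a - t + x) choose x) = (\<Sum>s\<in>{0..a}. (s + x) choose x)"
    by (rule sum.reindex_bij_witness[where i="\<lambda>s. a - s" and j="\<lambda>t. a - t"]) auto
  also have "\<dots> = (a + Suc x) choose (Suc x)"
    by (induction a) auto
  finally show ?thesis .
qed

definition Sw :: "nat \<Rightarrow> nat \<Rightarrow> (nat \<Rightarrow> nat) \<Rightarrow> (nat \<Rightarrow> nat \<Rightarrow> 'a::comm_semiring_1) \<Rightarrow> 'a" where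
  "Sw k n c w = (\<Sum>j\<in>Dc k n c. \<Prod>i\<in>{k..n}. w i (j i))"

lemma prod_split_lb: "k \<le> m \<Longrightarrow> prod (f::nat\<Rightarrow>'a::comm_monoid_mult) {k..m} = f k * prod f {Suc k..m}"
  by (simp add: Icc_eq_insert_lb_nat)

lemma Sw_split:
  assumes "k \<le> n"
  shows "Sw k n c w = (\<Sum>j\<in>Dc k n c. w k (j k) * (\<Prod>i\<in>{Suc k..n}. w i (j i)))"
  unfolding Sw_def using assms by (intro sum.cong refl) (simp add: prod_split_lb)

lemma Sw_A:
  assumes "k \<le> n" "1 \<le> c k"
  shows "Sw k n c w = (\<Sum>j\<in>Dc k n (c(k := c k - 1)). w k (Suc (j k)) * (\<Prod>i\<in>{Suc k..n}. w i (j i)))"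
proof -
  have "Sw k n c w = (\<Sum>j\<in>Dc k n c. w k (j k) * (\<Prod>i\<in>{Suc k..n}. w i (j i)))"
    using Sw_split[OF assms(1)] .
  also have "\<dots> = (\<Sum>j\<in>Dc k n (c(k := c k - 1)). w k ((j(k := Suc (j k))) k) * (\<Prod>i\<in>{Suc k..n}. w i ((j(k := Suc (j k))) i)))"
    by (rule sum.reindex_bij_betw[OF Dc_bijA[where c=c, OF assms], symmetric])
  also have "\<dots> = (\<Sum>j\<in>Dc k n (c(k := c k - 1)). w k (Suc (j k)) * (\<Prod>i\<in>{Suc k..n}. w i (j i)))"
    by (intro sum.cong refl arg_cong2[where f="(*)"] prod.cong) auto
  finally show ?thesis .
qed

lemma Sw_B:
  assumes "k < n" "c k = 0"
  shows "Sw k n c w = (\<Sum>j\<in>Dc (Suc k) n c. (\<Sum>p\<in>{0..j (Suc k)}. w k p * w (Suc k) (j (Suc k) - p))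
            * (\<Prod>i\<in>{Suc (Suc k)..n}. w i (j i)))"
proof -
  let ?f = "\<lambda>(j,p). (j::nat\<Rightarrow>nat)(k := p, Suc k := j (Suc k) - p)"
  have pr: "(\<Prod>i\<in>{k..n}. w i (J i)) = w k (J k) * w (Suc k) (J (Suc k)) * (\<Prod>i\<in>{Suc (Suc k)..n}. w i (J i))" for J :: "nat \<Rightarrow> nat"
    using assms prod_split_lb[of k n "\<lambda>i. w i (J i)"] prod_split_lb[of "Suc k" n "\<lambda>i. w i (J i)"] by (simp add: mult.assoc)
  have "Sw k n c w = (\<Sum>x\<in>(SIGMA j:Dc (Suc k) n c. {0..j (Suc k)}). \<Prod>i\<in>{k..n}. w i (?f x i))"
    unfolding Sw_def by (rule sum.reindex_bij_betw[OF Dc_bijB[where c=c, OF assms], symmetric])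
  also have "\<dots> = (\<Sum>j\<in>Dc (Suc k) n c. \<Sum>p\<in>{0..j (Suc k)}. \<Prod>i\<in>{k..n}. w i (?f (j,p) i))"
    by (subst sum.Sigma) (auto simp: finite_Dc split_beta)
  also have "\<dots> = (\<Sum>j\<in>Dc (Suc k) n c. \<Sum>p\<in>{0..j (Suc k)}. w k p * w (Suc k) (j (Suc k) - p)
            * (\<Prod>i\<in>{Suc (Suc k)..n}. w i (j i)))"
    unfolding pr by (intro sum.cong refl arg_cong2[where f="(*)"] prod.cong) auto
  also have "\<dots> = (\<Sum>j\<in>Dc (Suc k) n c. (\<Sum>p\<in>{0..j (Suc k)}. w k p * w (Suc k) (j (Suc k) - p))
            * (\<Prod>i\<in>{Suc (Suc k)..n}. w i (j i)))"
    by (simp add: sum_distrib_right)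
  finally show ?thesis .
qed

lemma Sw_base:
  assumes "c n = 0"
  shows "Sw n n c w = w n 0"
  unfolding Sw_def Dc_base[where c=c, OF assms] by simp

lemma Dc_le:
  assumes "j \<in> Dc k n c" "k \<le> n"
  shows "c k \<le> j k"
proof -
  have "\<forall>m\<in>{k..n}. sum c {k..m} \<le> sum j {k..m}" using assms unfolding Dc_alt by auto
  then have "sum c {k..k} \<le> sum j {k..k}" using assms by (intro bspec[of _ _ k]) auto
  thus ?thesis by simp
qed

definition wV :: "(nat \<Rightarrow> real) \<Rightarrow> nat \<Rightarrow> nat \<Rightarrow> real" where
  "wV a i x = a i ^ x / fact x"
definition w2 :: "(nat \<Rightarrow> nat) \<Rightarrow> (nat \<Rightarrow> nat) \<Rightarrow> nat \<Rightarrow> nat \<Rightarrow> nat" where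
  "w2 a c i x = (a i + c i) choose x"
definition w3 :: "nat \<Rightarrow> (nat \<Rightarrow> nat) \<Rightarrow> nat \<Rightarrow> nat \<Rightarrow> nat" where
  "w3 k a i x = (if i = k then (a i + x) choose x else (a i + x - 1) choose x)"

lemma R2_A:
  assumes "k \<le> n" "1 \<le> c k"
  shows "Sw k n c (w2 a c) = (\<Sum>t\<in>{0..a k}. Sw k n (c(k := c k - 1)) (w2 (a(k := a k - t)) (c(k := c k - 1))))"
proof -
  let ?c = "c(k := c k - 1)"
  have "(\<Sum>t\<in>{0..a k}. Sw k n ?c (w2 (a(k := a k - t)) ?c))
     = (\<Sum>t\<in>{0..a k}. \<Sum>j\<in>Dc k n ?c. ((a k - t + (c k - 1)) choose j k) * (\<Prod>i\<in>{Suc k..n}. w2 a c i (j i)))"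
    unfolding Sw_split[OF assms(1)] w2_def by (intro sum.cong refl arg_cong2[where f="(*)"] prod.cong) auto
  also have "\<dots> = (\<Sum>j\<in>Dc k n ?c. (\<Sum>t\<in>{0..a k}. (a k - t + (c k - 1)) choose j k) * (\<Prod>i\<in>{Suc k..n}. w2 a c i (j i)))"
    by (subst sum.swap) (simp add: sum_distrib_right)
  also have "\<dots> = (\<Sum>j\<in>Dc k n ?c. w2 a c k (Suc (j k)) * (\<Prod>i\<in>{Suc k..n}. w2 a c i (j i)))"
  proof (intro sum.cong refl arg_cong2[where f="(*)"])
    fix j assume j: "j \<in> Dc k n ?c"
    have "c k - 1 \<le> j k" using Dc_le[OF j assms(1)] by simp
    then show "(\<Sum>t\<in>{0..a k}. (a k - t + (c k - 1)) choose j k) = w2 a c k (Suc (j k))"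
      unfolding sum_choose_A2[OF \<open>c k - 1 \<le> j k\<close>] w2_def using assms by simp
  qed
  also have "\<dots> = Sw k n c (w2 a c)" using Sw_A[where c=c and w="w2 a c", OF assms] by simp
  finally show ?thesis by simp
qed

lemma R3_A:
  assumes "k \<le> n" "1 \<le> c k"
  shows "Sw k n c (w3 k a) = (\<Sum>t\<in>{0..a k}. Sw k n (c(k := c k - 1)) (w3 k (a(k := a k - t))))"
proof -
  let ?c = "c(k := c k - 1)"
  have "(\<Sum>t\<in>{0..a k}. Sw k n ?c (w3 k (a(k := a k - t))))
     = (\<Sum>t\<in>{0..a k}. \<Sum>j\<in>Dc k n ?c. ((a k - t + j k) choose j k) * (\<Prod>i\<in>{Suc k..n}. w3 k a i (j i)))"
    unfolding Sw_split[OF assms(1)] w3_def by (intro sum.cong refl arg_cong2[where f="(*)"] prod.cong) auto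
  also have "\<dots> = (\<Sum>j\<in>Dc k n ?c. (\<Sum>t\<in>{0..a k}. (a k - t + j k) choose j k) * (\<Prod>i\<in>{Suc k..n}. w3 k a i (j i)))"
    by (subst sum.swap) (simp add: sum_distrib_right)
  also have "\<dots> = (\<Sum>j\<in>Dc k n ?c. w3 k a k (Suc (j k)) * (\<Prod>i\<in>{Suc k..n}. w3 k a i (j i)))"
    unfolding sum_choose_A3 w3_def by simp
  also have "\<dots> = Sw k n c (w3 k a)" using Sw_A[where c=c and w="w3 k a", OF assms] by simp
  finally show ?thesis by simp
qed

lemma R2_B:
  assumes "k < n" "c k = 0"
  shows "Sw k n c (w2 a c) = Sw (Suc k) n c (w2 (a(Suc k := a k + a (Suc k))) c)"
  unfolding Sw_B[where c=c, OF assms] Sw_split[of "Suc k" n, OF Suc_leI[OF assms(1)]] using assms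
  by (intro sum.cong refl arg_cong2[where f="(*)"] prod.cong)
     (auto simp: w2_def atLeast0AtMost vandermonde add.assoc)

lemma R3_B:
  assumes "k < n" "c k = 0"
  shows "Sw k n c (w3 k a) = Sw (Suc k) n c (w3 (Suc k) (a(Suc k := a k + a (Suc k))))"
  unfolding Sw_B[where c=c, OF assms] Sw_split[of "Suc k" n, OF Suc_leI[OF assms(1)]] using assms
  by (intro sum.cong refl arg_cong2[where f="(*)"] prod.cong)
     (auto simp: w3_def multichoose_vandermonde')

lemma FV_B:
  assumes "k < n" "c k = 0"
  shows "Sw k n c (wV a) = Sw (Suc k) n c (wV (a(Suc k := a k + a (Suc k))))"
  unfolding Sw_B[where c=c, OF assms] Sw_split[of "Suc k" n, OF Suc_leI[OF assms(1)]] using assms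
  by (intro sum.cong refl arg_cong2[where f="(*)"] prod.cong)
     (auto simp: wV_def exp_binomial_fact)

definition RegN :: "nat set \<Rightarrow> (nat \<Rightarrow> nat) \<Rightarrow> nat \<Rightarrow> nat \<Rightarrow> (nat \<Rightarrow> nat) \<Rightarrow> (nat \<Rightarrow> nat) set" where
  "RegN E v k n a = {y \<in> E \<rightarrow>\<^sub>E UNIV. \<forall>m\<in>{k..n}. sum y {e\<in>E. v e \<le> m} \<le> sum a {k..m}}"

lemma sum_upd_remove:
  fixes y :: "nat \<Rightarrow> 'a::comm_monoid_add"
  assumes "finite E" "e \<in> E" "v e \<le> m"
  shows "sum (y(e := t)) {e'\<in>E. v e' \<le> m} = t + sum y {e'\<in>E - {e}. v e' \<le> m}"
proof -
  have "{e'\<in>E. v e' \<le> m} = insert e {e'\<in>E - {e}. v e' \<le> m}" using assms by auto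
  moreover have "sum (y(e := t)) {e'\<in>E - {e}. v e' \<le> m} = sum y {e'\<in>E - {e}. v e' \<le> m}"
    by (intro sum.cong) auto
  ultimately show ?thesis using assms by (simp add: sum.insert)
qed

lemma sum_upd_out: "k \<notin> A \<Longrightarrow> sum (f(k := x)) A = sum f A"
  by (intro sum.cong) auto

lemma sum_upd_out_Suc: "sum (f(k := x)) {Suc k..m} = sum f {Suc k..m}"
  by (intro sum.cong) auto

lemma sum_upd_out_SS: "sum (f(Suc k := x)) {Suc (Suc k)..m} = sum f {Suc (Suc k)..m}"
  by (intro sum.cong) auto

lemma sum_a_upd:
  fixes a :: "nat \<Rightarrow> 'a::ab_group_add"
  assumes "k \<le> m"
  shows "sum (a(k := a k - t)) {k..m} = sum a {k..m} - t"
proof -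
  have "sum (a(k := a k - t)) {k..m} = (a k - t) + sum a {Suc k..m}"
    using sum_split_lb[OF assms, of "a(k := a k - t)"] by (simp add: sum_upd_out_Suc sum_upd_out_SS)
  thus ?thesis using sum_split_lb[OF assms, of a] by simp
qed

lemma sum_a_upd_nat:
  fixes a :: "nat \<Rightarrow> nat"
  assumes "k \<le> m" "t \<le> a k"
  shows "sum (a(k := a k - t)) {k..m} = sum a {k..m} - t"
proof -
  have "sum (a(k := a k - t)) {k..m} = (a k - t) + sum a {Suc k..m}"
    using sum_split_lb[OF assms(1), of "a(k := a k - t)"] by (simp add: sum_upd_out_Suc sum_upd_out_SS)
  thus ?thesis using sum_split_lb[OF assms(1), of a] assms by simp
qed

lemma sum_a_merge:
  fixes a :: "nat \<Rightarrow> 'a::comm_monoid_add"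
  assumes "Suc k \<le> m"
  shows "sum (a(Suc k := a k + a (Suc k))) {Suc k..m} = sum a {k..m}"
proof -
  have "sum (a(Suc k := a k + a (Suc k))) {Suc k..m} = (a k + a (Suc k)) + sum a {Suc (Suc k)..m}"
    using sum_split_lb[OF assms, of "a(Suc k := a k + a (Suc k))"] by (simp add: sum_upd_out_Suc sum_upd_out_SS)
  thus ?thesis using sum_split_lb[of k m a] sum_split_lb[OF assms, of a] assms by (simp add: add.assoc)
qed

lemma finite_RegN:
  assumes "finite E" "\<forall>e\<in>E. v e \<in> {k..n}" "k \<le> n"
  shows "finite (RegN E v k n a)"
proof -
  have "RegN E v k n a \<subseteq> E \<rightarrow>\<^sub>E {0..sum a {k..n}}"
  proof
    fix y assume y: "y \<in> RegN E v k n a"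
    have "y e \<le> sum a {k..n}" if "e \<in> E" for e
    proof -
      have "y e \<le> sum y {e\<in>E. v e \<le> n}" using that assms by (intro member_le_sum) auto
      also have "\<dots> \<le> sum a {k..n}" using y assms unfolding RegN_def by auto
      finally show ?thesis .
    qed
    thus "y \<in> E \<rightarrow>\<^sub>E {0..sum a {k..n}}" using y unfolding RegN_def by (auto simp: PiE_def Pi_def)
  qed
  thus ?thesis by (rule finite_subset) (intro finite_PiE, auto simp: assms)
qed

lemma RegN_A:
  assumes "finite E" "\<forall>e\<in>E. v e \<in> {k..n}" "k \<le> n" "e \<in> E" "v e = k"
  shows "card (RegN E v k n a) = (\<Sum>t\<in>{0..a k}. card (RegN (E - {e}) v k n (a(k := a k - t))))"
proof -
  let ?E = "E - {e}"
  have "bij_betw (\<lambda>y. (y e, y(e := undefined))) (RegN E v k n a) (SIGMA t:{0..a k}. RegN ?E v k n (a(k := a k - t)))"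
  proof (rule bij_betw_byWitness[where f'="\<lambda>(t,y). y(e := t)"])
    show "\<forall>y\<in>RegN E v k n a. (\<lambda>(t,y). y(e := t)) (y e, y(e := undefined)) = y" by auto
    show "\<forall>p\<in>(SIGMA t:{0..a k}. RegN ?E v k n (a(k := a k - t))). (\<lambda>y. (y e, y(e := undefined))) ((\<lambda>(t,y). y(e := t)) p) = p"
      by (auto simp: RegN_def PiE_def extensional_def fun_eq_iff)
    show "(\<lambda>y. (y e, y(e := undefined))) ` RegN E v k n a \<subseteq> (SIGMA t:{0..a k}. RegN ?E v k n (a(k := a k - t)))"
    proof safe
      fix y assume y: "y \<in> RegN E v k n a"
      have yk: "y e \<le> a k"
      proof -
        have "\<forall>m\<in>{k..n}. sum y {e'\<in>E. v e' \<le> m} \<le> sum a {k..m}" using y unfolding RegN_def by auto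
        from this[rule_format, of k] have "sum y {e'\<in>E. v e' \<le> k} \<le> sum a {k..k}" using assms(3) by simp
        moreover have "y e \<le> sum y {e'\<in>E. v e' \<le> k}" using assms by (intro member_le_sum) auto
        ultimately show ?thesis by simp
      qed
      thus "y e \<in> {0..a k}" by simp
      show "y(e := undefined) \<in> RegN ?E v k n (a(k := a k - y e))"
        unfolding RegN_def mem_Collect_eq
      proof (intro conjI ballI)
        show "y(e := undefined) \<in> ?E \<rightarrow>\<^sub>E UNIV" using y unfolding RegN_def by (auto simp: PiE_def extensional_def)
        fix m assume m: "m \<in> {k..n}"
        have "sum y {e'\<in>E. v e' \<le> m} \<le> sum a {k..m}" using y m unfolding RegN_def by auto
        moreover have "sum y {e'\<in>E. v e' \<le> m} = y e + sum y {e'\<in>?E. v e' \<le> m}"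
          using sum_upd_remove[of E e v m y "y e"] assms m by simp
        moreover have "sum (y(e := undefined)) {e'\<in>?E. v e' \<le> m} = sum y {e'\<in>?E. v e' \<le> m}"
          by (intro sum.cong) auto
        ultimately show "sum (y(e := undefined)) {e'\<in>?E. v e' \<le> m} \<le> sum (a(k := a k - y e)) {k..m}"
          using sum_a_upd_nat[of k m "y e" a] m yk by simp
      qed
    qed
    show "(\<lambda>(t,y). y(e := t)) ` (SIGMA t:{0..a k}. RegN ?E v k n (a(k := a k - t))) \<subseteq> RegN E v k n a"
    proof safe
      fix t y assume t: "t \<in> {0..a k}" and y: "y \<in> RegN ?E v k n (a(k := a k - t))"
      show "y(e := t) \<in> RegN E v k n a"
        unfolding RegN_def mem_Collect_eq
      proof (intro conjI ballI)
        show "y(e := t) \<in> E \<rightarrow>\<^sub>E UNIV" using y assms unfolding RegN_def by (auto simp: PiE_def extensional_def)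
        fix m assume m: "m \<in> {k..n}"
        have "sum y {e'\<in>?E. v e' \<le> m} \<le> sum (a(k := a k - t)) {k..m}" using y m unfolding RegN_def by auto
        moreover have "sum (y(e := t)) {e'\<in>E. v e' \<le> m} = t + sum y {e'\<in>?E. v e' \<le> m}"
          using sum_upd_remove[of E e v m y t] assms m by simp
        moreover have "t \<le> sum a {k..m}" using t sum_split_lb[of k m a] m by auto
        ultimately show "sum (y(e := t)) {e'\<in>E. v e' \<le> m} \<le> sum a {k..m}"
          using sum_a_upd_nat[of k m t a] m t by simp
      qed
    qed
  qed
  then have "card (RegN E v k n a) = card (SIGMA t:{0..a k}. RegN ?E v k n (a(k := a k - t)))"
    by (rule bij_betw_same_card)
  also have "\<dots> = (\<Sum>t\<in>{0..a k}. card (RegN ?E v k n (a(k := a k - t))))"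
    using assms by (intro card_SigmaI) (auto intro!: finite_RegN)
  finally show ?thesis .
qed

lemma RegN_B:
  assumes "\<forall>e\<in>E. v e \<in> {k..n}" "k < n" "\<forall>e\<in>E. v e \<noteq> k"
  shows "RegN E v k n a = RegN E v (Suc k) n (a(Suc k := a k + a (Suc k)))"
proof -
  have "(\<forall>m\<in>{k..n}. sum y {e\<in>E. v e \<le> m} \<le> sum a {k..m}) \<longleftrightarrow>
        (\<forall>m\<in>{Suc k..n}. sum y {e\<in>E. v e \<le> m} \<le> sum (a(Suc k := a k + a (Suc k))) {Suc k..m})" for y
  proof -
    have E0: "{e\<in>E. v e \<le> k} = {}" using assms by force
    have Pk: "sum y {e\<in>E. v e \<le> k} \<le> sum a {k..k}" unfolding E0 by simp
    have I: "{k..n} = insert k {Suc k..n}" using assms by auto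
    have eq: "\<forall>m\<in>{Suc k..n}. sum (a(Suc k := a k + a (Suc k))) {Suc k..m} = sum a {k..m}"
      using sum_a_merge[of k _ a] by auto
    show ?thesis unfolding I using Pk eq by auto
  qed
  thus ?thesis unfolding RegN_def by auto
qed

lemma RegN_C: "RegN {} v n n a = {\<lambda>_. undefined}"
  unfolding RegN_def by auto

lemma count_gen:
  fixes \<Phi> :: "nat \<Rightarrow> (nat \<Rightarrow> nat) \<Rightarrow> (nat \<Rightarrow> nat) \<Rightarrow> nat"
  assumes A: "\<And>k c a. k \<le> n \<Longrightarrow> 1 \<le> c k \<Longrightarrow> \<Phi> k c a = (\<Sum>t\<in>{0..a k}. \<Phi> k (c(k := c k - 1)) (a(k := a k - t)))"
    and B: "\<And>k c a. k < n \<Longrightarrow> c k = 0 \<Longrightarrow> \<Phi> k c a = \<Phi> (Suc k) c (a(Suc k := a k + a (Suc k)))"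
    and C: "\<And>c a. c n = 0 \<Longrightarrow> \<Phi> n c a = 1"
  shows "finite E \<Longrightarrow> \<forall>e\<in>E. v e \<in> {k..n} \<Longrightarrow> k \<le> n \<Longrightarrow> \<forall>i\<in>{k..n}. c i = card {e\<in>E. v e = i}
    \<Longrightarrow> card (RegN E v k n a) = \<Phi> k c a"
proof (induction "card E + (n - k)" arbitrary: E k c a rule: less_induct)
  case less
  show ?case
  proof (cases "\<exists>e\<in>E. v e = k")
    case True
    then obtain e where e: "e \<in> E" "v e = k" by blast
    let ?c = "c(k := c k - 1)"
    have ck: "1 \<le> c k"
    proof -
      have "c k = card {e\<in>E. v e = k}" using less.prems by auto
      moreover have "card {e\<in>E. v e = k} \<noteq> 0" using e less.prems by auto
      ultimately show ?thesis by simp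
    qed
    have IH: "card (RegN (E - {e}) v k n (a(k := a k - t))) = \<Phi> k ?c (a(k := a k - t))" for t
    proof (rule less.hyps)
      have "0 < card E" using e less.prems(1) card_gt_0_iff by blast
      then show "card (E - {e}) + (n - k) < card E + (n - k)" using e less.prems by (simp add: card_Diff_singleton)
      show "\<forall>i\<in>{k..n}. ?c i = card {e' \<in> E - {e}. v e' = i}"
      proof
        fix i assume i: "i \<in> {k..n}"
        show "?c i = card {e' \<in> E - {e}. v e' = i}"
        proof (cases "i = k")
          case True
          have "{e' \<in> E - {e}. v e' = i} = {e' \<in> E. v e' = i} - {e}" by auto
          thus ?thesis using True e less.prems i by (simp add: card_Diff_singleton)
        next
          case False
          have "{e' \<in> E - {e}. v e' = i} = {e' \<in> E. v e' = i}" using e False by auto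
          thus ?thesis using False less.prems i by simp
        qed
      qed
    qed (use less.prems in auto)
    show ?thesis
      using RegN_A[OF less.prems(1-3) e] IH A[where c=c and a=a, OF less.prems(3) ck] by simp
  next
    case False
    show ?thesis
    proof (cases "k < n")
      case True
      have "card (RegN E v k n a) = card (RegN E v (Suc k) n (a(Suc k := a k + a (Suc k))))"
        using RegN_B[OF less.prems(2) True] False by auto
      also have "\<dots> = \<Phi> (Suc k) c (a(Suc k := a k + a (Suc k)))"
      proof (rule less.hyps)
        show "\<forall>e\<in>E. v e \<in> {Suc k..n}" using less.prems(2) False by (auto simp: Suc_le_eq le_less)
      qed (use less.prems True in auto)
      also have "\<dots> = \<Phi> k c a"
      proof (rule B[symmetric, OF True])
        have "{e\<in>E. v e = k} = {}" using False by auto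
        thus "c k = 0" using less.prems by auto
      qed
      finally show ?thesis .
    next
      case kn: False
      hence k: "k = n" using less.prems by simp
      hence E: "E = {}" using less.prems(2) False by auto
      have "c n = 0" using less.prems k E by auto
      thus ?thesis using C k E RegN_C by simp
    qed
  qed
qed

lemma count_R2:
  assumes "finite E" "\<forall>e\<in>E. v e \<in> {k..n}" "k \<le> n" "\<forall>i\<in>{k..n}. c i = card {e\<in>E. v e = i}"
  shows "card (RegN E v k n a) = Sw k n c (w2 a c)"
proof (rule count_gen[where \<Phi>="\<lambda>k c a. Sw k n c (w2 a c)", OF _ _ _ assms])
  show "\<And>k c a. k \<le> n \<Longrightarrow> 1 \<le> c k \<Longrightarrow> Sw k n c (w2 a c) = (\<Sum>t\<in>{0..a k}. Sw k n (c(k := c k - 1)) (w2 (a(k := a k - t)) (c(k := c k - 1))))"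
    by (rule R2_A)
  show "\<And>k c a. k < n \<Longrightarrow> c k = 0 \<Longrightarrow> Sw k n c (w2 a c) = Sw (Suc k) n c (w2 (a(Suc k := a k + a (Suc k))) c)"
    by (rule R2_B)
  show "\<And>c a. c n = 0 \<Longrightarrow> Sw n n c (w2 a c) = 1"
    by (simp add: Sw_base w2_def)
qed

lemma count_R3:
  assumes "finite E" "\<forall>e\<in>E. v e \<in> {k..n}" "k \<le> n" "\<forall>i\<in>{k..n}. c i = card {e\<in>E. v e = i}"
  shows "card (RegN E v k n a) = Sw k n c (w3 k a)"
proof (rule count_gen[where \<Phi>="\<lambda>k c a. Sw k n c (w3 k a)", OF _ _ _ assms])
  show "\<And>k c a. k \<le> n \<Longrightarrow> 1 \<le> c k \<Longrightarrow> Sw k n c (w3 k a) = (\<Sum>t\<in>{0..a k}. Sw k n (c(k := c k - 1)) (w3 k (a(k := a k - t))))"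
    by (rule R3_A)
  show "\<And>k c a. k < n \<Longrightarrow> c k = 0 \<Longrightarrow> Sw k n c (w3 k a) = Sw (Suc k) n c (w3 (Suc k) (a(Suc k := a k + a (Suc k))))"
    by (rule R3_B)
  show "\<And>c a. c n = 0 \<Longrightarrow> Sw n n c (w3 n a) = 1"
    by (simp add: Sw_base w3_def)
qed

definition RegR :: "nat set \<Rightarrow> (nat \<Rightarrow> nat) \<Rightarrow> nat \<Rightarrow> nat \<Rightarrow> (nat \<Rightarrow> real) \<Rightarrow> (nat \<Rightarrow> real) set" where
  "RegR E v k n a = {y \<in> E \<rightarrow>\<^sub>E UNIV. (\<forall>e\<in>E. 0 \<le> y e) \<and> (\<forall>m\<in>{k..n}. sum y {e\<in>E. v e \<le> m} \<le> sum a {k..m})}"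

lemma meas_sum_sub: "(\<lambda>y. sum y {e\<in>E. v e \<le> m}) \<in> borel_measurable (Pi\<^sub>M E (\<lambda>_. lborel :: real measure))"
proof (rule borel_measurable_sum)
  fix e assume "e \<in> {e\<in>E. v e \<le> m}"
  then have "e \<in> E" by simp
  then show "(\<lambda>y. y e) \<in> borel_measurable (Pi\<^sub>M E (\<lambda>_. lborel))"
    using measurable_component_singleton[OF \<open>e \<in> E\<close>, of "\<lambda>_. lborel"] by (simp add: measurable_lborel2)
qed

lemma RegR_sets:
  assumes "finite E"
  shows "RegR E v k n a \<in> sets (Pi\<^sub>M E (\<lambda>_. lborel))"
proof -
  have "RegR E v k n a = {y\<in>space (Pi\<^sub>M E (\<lambda>_. lborel)). (\<forall>e\<in>E. 0 \<le> y e) \<and> (\<forall>m\<in>{k..n}. sum y {e\<in>E. v e \<le> m} \<le> sum a {k..m})}"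
    unfolding RegR_def by (auto simp: space_PiM)
  also have "\<dots> \<in> sets (Pi\<^sub>M E (\<lambda>_. lborel))"
  proof (intro sets.sets_Collect_conj sets.sets_Collect_finite_All)
    fix e assume "e \<in> E"
    then have [measurable]: "(\<lambda>y. y e) \<in> borel_measurable (Pi\<^sub>M E (\<lambda>_. lborel))"
      using measurable_component_singleton[OF \<open>e \<in> E\<close>, of "\<lambda>_. lborel"] by (simp add: measurable_lborel2)
    show "{y\<in>space (Pi\<^sub>M E (\<lambda>_. lborel)). 0 \<le> (y e::real)} \<in> sets (Pi\<^sub>M E (\<lambda>_. lborel))" by measurable
  next
    fix m 
    have [measurable]: "(\<lambda>y. sum y {e\<in>E. v e \<le> m}) \<in> borel_measurable (Pi\<^sub>M E (\<lambda>_. lborel :: real measure))"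
      by (rule meas_sum_sub)
    show "{y\<in>space (Pi\<^sub>M E (\<lambda>_. lborel)). sum y {e\<in>E. v e \<le> m} \<le> sum a {k..m}} \<in> sets (Pi\<^sub>M E (\<lambda>_. lborel))"
      by measurable
  qed (auto simp: assms)
  finally show ?thesis .
qed

lemma RegR_step_mem:
  assumes "finite E" "\<forall>e\<in>E. v e \<in> {k..n}" "k \<le> n" "e \<in> E" "v e = k" "y \<in> (E - {e}) \<rightarrow>\<^sub>E UNIV"
  shows "y(e := t) \<in> RegR E v k n a \<longleftrightarrow> t \<in> {0..a k} \<and> y \<in> RegR (E - {e}) v k n (a(k := a k - t))"
proof
  assume Y: "y(e := t) \<in> RegR E v k n a"
  have nn: "\<forall>e'\<in>E. 0 \<le> (y(e := t)) e'" and cons: "\<forall>m\<in>{k..n}. sum (y(e := t)) {e'\<in>E. v e' \<le> m} \<le> sum a {k..m}"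
    using Y unfolding RegR_def mem_Collect_eq by blast+
  have "0 \<le> (y(e := t)) e" using nn assms(4) by blast
  hence t0: "0 \<le> t" by simp
  have ynn: "\<forall>e'\<in>E - {e}. 0 \<le> y e'"
  proof
    fix e' assume "e' \<in> E - {e}"
    then have "0 \<le> (y(e := t)) e'" "e' \<noteq> e" using nn by auto
    thus "0 \<le> y e'" by simp
  qed
  have eqs: "sum (y(e := t)) {e'\<in>E. v e' \<le> m} = t + sum y {e'\<in>E - {e}. v e' \<le> m}" if "m \<in> {k..n}" for m
    using sum_upd_remove[of E e v m y t] assms that by simp
  have tk: "t \<le> a k"
  proof -
    have "k \<in> {k..n}" using assms(3) by simp
    from bspec[OF cons this] have "sum (y(e := t)) {e'\<in>E. v e' \<le> k} \<le> sum a {k..k}" .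
    moreover have "0 \<le> sum y {e'\<in>E - {e}. v e' \<le> k}" using ynn by (intro sum_nonneg) auto
    ultimately show ?thesis using eqs[of k] assms(3) by simp
  qed
  have "y \<in> RegR (E - {e}) v k n (a(k := a k - t))"
    unfolding RegR_def mem_Collect_eq
  proof (intro conjI ballI)
    show "y \<in> (E - {e}) \<rightarrow>\<^sub>E UNIV" by (rule assms(6))
    show "0 \<le> y e'" if "e' \<in> E - {e}" for e' using ynn that by blast
    fix m assume m: "m \<in> {k..n}"
    have "t + sum y {e'\<in>E - {e}. v e' \<le> m} \<le> sum a {k..m}" using bspec[OF cons m] eqs[OF m] by simp
    moreover have "sum (a(k := a k - t)) {k..m} = sum a {k..m} - t" using m by (intro sum_a_upd) simp
    ultimately show "sum y {e'\<in>E - {e}. v e' \<le> m} \<le> sum (a(k := a k - t)) {k..m}" by simp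
  qed
  thus "t \<in> {0..a k} \<and> y \<in> RegR (E - {e}) v k n (a(k := a k - t))" using t0 tk by simp
next
  assume T: "t \<in> {0..a k} \<and> y \<in> RegR (E - {e}) v k n (a(k := a k - t))"
  have eqs: "sum (y(e := t)) {e'\<in>E. v e' \<le> m} = t + sum y {e'\<in>E - {e}. v e' \<le> m}" if "m \<in> {k..n}" for m
    using sum_upd_remove[of E e v m y t] assms that by simp
  have yR: "y \<in> (E - {e}) \<rightarrow>\<^sub>E UNIV" "\<forall>e'\<in>E - {e}. 0 \<le> y e'"
    "\<forall>m\<in>{k..n}. sum y {e'\<in>E - {e}. v e' \<le> m} \<le> sum (a(k := a k - t)) {k..m}"
    using T unfolding RegR_def mem_Collect_eq by blast+
  show "y(e := t) \<in> RegR E v k n a"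
    unfolding RegR_def mem_Collect_eq
  proof (intro conjI ballI)
    show "y(e := t) \<in> E \<rightarrow>\<^sub>E UNIV" using yR(1) assms(4) by (auto simp: PiE_def extensional_def)
    show "0 \<le> (y(e := t)) e'" if "e' \<in> E" for e' using yR(2) T that by auto
    fix m assume m: "m \<in> {k..n}"
    have "sum (a(k := a k - t)) {k..m} = sum a {k..m} - t" using m by (intro sum_a_upd) simp
    then show "sum (y(e := t)) {e'\<in>E. v e' \<le> m} \<le> sum a {k..m}"
      using eqs[OF m] bspec[OF yR(3) m] by simp
  qed
qed

lemma RegR_B:
  assumes "\<forall>e\<in>E. v e \<in> {k..n}" "k < n" "\<forall>e\<in>E. v e \<noteq> k" "a k \<ge> 0"
  shows "RegR E v k n a = RegR E v (Suc k) n (a(Suc k := a k + a (Suc k)))"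
proof -
  have "(\<forall>m\<in>{k..n}. sum y {e\<in>E. v e \<le> m} \<le> sum a {k..m}) \<longleftrightarrow>
        (\<forall>m\<in>{Suc k..n}. sum y {e\<in>E. v e \<le> m} \<le> sum (a(Suc k := a k + a (Suc k))) {Suc k..m})" for y
  proof -
    have E0: "{e\<in>E. v e \<le> k} = {}" using assms by force
    have Pk: "sum y {e\<in>E. v e \<le> k} \<le> sum a {k..k}" unfolding E0 using assms by simp
    have I: "{k..n} = insert k {Suc k..n}" using assms by auto
    have eq: "\<forall>m\<in>{Suc k..n}. sum (a(Suc k := a k + a (Suc k))) {Suc k..m} = sum a {k..m}"
      using sum_a_merge[of k _ a] by auto
    show ?thesis unfolding I using Pk eq by auto
  qed
  thus ?thesis unfolding RegR_def by auto
qed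

lemma RegR_C: "a n \<ge> 0 \<Longrightarrow> RegR {} v n n a = {\<lambda>_. undefined}"
  unfolding RegR_def by auto

lemma deriv_term:
  fixes b q :: real
  shows "((\<lambda>t. (b - t) ^ Suc m / fact (Suc m) * q) has_real_derivative (-((b - x) ^ m / fact m * q))) (at x)"
proof -
  have "((\<lambda>t. (b - t) ^ Suc m / fact (Suc m) * q) has_real_derivative
          (of_nat (Suc m) * (b - x) ^ m * (0 - 1) / fact (Suc m) * q)) (at x)"
    by (intro derivative_eq_intros) auto
  also have "of_nat (Suc m) * (b - x) ^ m * (0 - 1) / fact (Suc m) * q = -((b - x) ^ m / fact m * q)"
    by (simp add: fact_Suc field_simps del: of_nat_Suc)
  finally show ?thesis .
qed

lemma FV_A_integral:
  assumes "k \<le> n" "1 \<le> c k" "\<forall>i. 0 \<le> a i"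
  shows "(\<integral>\<^sup>+t. ennreal (Sw k n (c(k := c k - 1)) (wV (a(k := a k - t)))) * indicator {0..a k} t \<partial>lborel)
          = ennreal (Sw k n c (wV a))"
proof -
  let ?c = "c(k := c k - 1)"
  let ?D = "Dc k n ?c"
  define Q where "Q j = (\<Prod>i\<in>{Suc k..n}. wV a i (j i))" for j :: "nat \<Rightarrow> nat"
  define f where "f t = (\<Sum>j\<in>?D. (a k - t) ^ (j k) / fact (j k) * Q j)" for t
  define F where "F t = - (\<Sum>j\<in>?D. (a k - t) ^ Suc (j k) / fact (Suc (j k)) * Q j)" for t
  have f_eq: "Sw k n ?c (wV (a(k := a k - t))) = f t" for t
    unfolding Sw_split[OF assms(1)] f_def Q_def
    by (intro sum.cong refl arg_cong2[where f="(*)"] prod.cong) (auto simp: wV_def)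
  have Qnn: "0 \<le> Q j" for j unfolding Q_def wV_def using assms(3) by (intro prod_nonneg) auto
  have [measurable]: "f \<in> borel_measurable borel" unfolding f_def by measurable
  have deriv: "DERIV F x :> f x" for x
  proof -
    have "((\<lambda>t. \<Sum>j\<in>?D. (a k - t) ^ Suc (j k) / fact (Suc (j k)) * Q j) has_real_derivative
           (\<Sum>j\<in>?D. -((a k - x) ^ (j k) / fact (j k) * Q j))) (at x)"
      by (rule DERIV_sum) (rule deriv_term)
    then have "DERIV F x :> - (\<Sum>j\<in>?D. -((a k - x) ^ (j k) / fact (j k) * Q j))"
      unfolding F_def by (rule DERIV_minus)
    thus ?thesis by (simp add: f_def sum_negf)
  qed
  have fnn: "0 \<le> f x" if "x \<in> {0..a k}" for x
    unfolding f_def using that Qnn by (intro sum_nonneg mult_nonneg_nonneg divide_nonneg_nonneg zero_le_power) auto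
  have "(\<integral>\<^sup>+t. ennreal (Sw k n ?c (wV (a(k := a k - t)))) * indicator {0..a k} t \<partial>lborel)
      = (\<integral>\<^sup>+t. ennreal (f t) * indicator {0..a k} t \<partial>lborel)" by (simp only: f_eq)
  also have "\<dots> = ennreal (F (a k) - F 0)"
    using assms(3) by (intro nn_integral_FTC_Icc deriv fnn) auto
  also have "F (a k) = 0" unfolding F_def by simp
  also have "F 0 = - Sw k n c (wV a)"
    unfolding F_def Sw_A[where c=c, OF assms(1,2)] Q_def by (simp add: wV_def)
  finally show ?thesis by (simp only: diff_0 minus_minus)
qed

lemma vol_gen:
  "finite E \<Longrightarrow> \<forall>e\<in>E. v e \<in> {k..n} \<Longrightarrow> k \<le> n \<Longrightarrow> \<forall>i\<in>{k..n}. c i = card {e\<in>E. v e = i}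
    \<Longrightarrow> \<forall>i. 0 \<le> a i \<Longrightarrow> emeasure (Pi\<^sub>M E (\<lambda>_. lborel)) (RegR E v k n a) = ennreal (Sw k n c (wV a))"
proof (induction "card E + (n - k)" arbitrary: E k c a rule: less_induct)
  case less
  show ?case
  proof (cases "\<exists>e\<in>E. v e = k")
    case True
    then obtain e where e: "e \<in> E" "v e = k" by blast
    let ?c = "c(k := c k - 1)"
    let ?E = "E - {e}"
    let ?M = "\<lambda>A. Pi\<^sub>M A (\<lambda>_. lborel :: real measure)"
    have ck: "1 \<le> c k"
    proof -
      have "c k = card {e\<in>E. v e = k}" using less.prems by auto
      moreover have "card {e\<in>E. v e = k} \<noteq> 0" using e less.prems by auto
      ultimately show ?thesis by simp
    qed
    have IH: "emeasure (?M ?E) (RegR ?E v k n (a(k := a k - t))) = ennreal (Sw k n ?c (wV (a(k := a k - t))))"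
      if t: "t \<in> {0..a k}" for t
    proof (rule less.hyps)
      have "0 < card E" using e less.prems(1) card_gt_0_iff by blast
      then show "card ?E + (n - k) < card E + (n - k)" using e less.prems by (simp add: card_Diff_singleton)
      show "\<forall>i\<in>{k..n}. ?c i = card {e' \<in> ?E. v e' = i}"
      proof
        fix i assume i: "i \<in> {k..n}"
        show "?c i = card {e' \<in> ?E. v e' = i}"
        proof (cases "i = k")
          case True
          have "{e' \<in> ?E. v e' = i} = {e' \<in> E. v e' = i} - {e}" by auto
          thus ?thesis using True e less.prems i by (simp add: card_Diff_singleton)
        next
          case False
          have "{e' \<in> ?E. v e' = i} = {e' \<in> E. v e' = i}" using e False by auto
          thus ?thesis using False less.prems i by simp
        qed
      qed
      show "\<forall>i. 0 \<le> (a(k := a k - t)) i" using less.prems(5) t by auto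
    qed (use less.prems in auto)
    interpret product_sigma_finite "\<lambda>_. lborel :: real measure" by standard
    have Eins: "E = insert e ?E" using e by auto
    have finE: "finite ?E" using less.prems by simp
    have meas [measurable]: "RegR E v k n a \<in> sets (?M E)" by (rule RegR_sets) (use less.prems in simp)
    have "emeasure (?M E) (RegR E v k n a) = (\<integral>\<^sup>+x. indicator (RegR E v k n a) x \<partial>?M E)"
      using meas by simp
    also have "\<dots> = (\<integral>\<^sup>+x. indicator (RegR E v k n a) x \<partial>?M (insert e ?E))"
      using Eins by simp
    also have "\<dots> = (\<integral>\<^sup>+t. \<integral>\<^sup>+y. indicator (RegR E v k n a) (y(e := t)) \<partial>?M ?E \<partial>lborel)"
      using finE meas Eins by (intro product_nn_integral_insert_rev) (auto simp flip: Eins)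
    also have "\<dots> = (\<integral>\<^sup>+t. \<integral>\<^sup>+y. indicator {0..a k} t * indicator (RegR ?E v k n (a(k := a k - t))) y \<partial>?M ?E \<partial>lborel)"
    proof (intro nn_integral_cong)
      fix t y assume y: "y \<in> space (?M ?E)"
      then have y': "y \<in> ?E \<rightarrow>\<^sub>E UNIV" by (simp add: space_PiM)
      show "indicator (RegR E v k n a) (y(e := t)) = (indicator {0..a k} t * indicator (RegR ?E v k n (a(k := a k - t))) y :: ennreal)"
        using RegR_step_mem[OF less.prems(1-3) e y', of t a] by (auto simp: indicator_def)
    qed
    also have "\<dots> = (\<integral>\<^sup>+t. indicator {0..a k} t * emeasure (?M ?E) (RegR ?E v k n (a(k := a k - t))) \<partial>lborel)"
    proof (intro nn_integral_cong)
      fix t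
      have "(\<integral>\<^sup>+y. indicator {0..a k} t * indicator (RegR ?E v k n (a(k := a k - t))) y \<partial>?M ?E)
          = indicator {0..a k} t * (\<integral>\<^sup>+y. indicator (RegR ?E v k n (a(k := a k - t))) y \<partial>?M ?E)"
        using RegR_sets[OF finE] by (intro nn_integral_cmult) auto
      also have "\<dots> = indicator {0..a k} t * emeasure (?M ?E) (RegR ?E v k n (a(k := a k - t)))"
        using RegR_sets[OF finE] by simp
      finally show "(\<integral>\<^sup>+y. indicator {0..a k} t * indicator (RegR ?E v k n (a(k := a k - t))) y \<partial>?M ?E)
          = indicator {0..a k} t * emeasure (?M ?E) (RegR ?E v k n (a(k := a k - t)))" .
    qed
    also have "\<dots> = (\<integral>\<^sup>+t. ennreal (Sw k n ?c (wV (a(k := a k - t)))) * indicator {0..a k} t \<partial>lborel)"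
      by (intro nn_integral_cong) (auto simp: indicator_def IH)
    also have "\<dots> = ennreal (Sw k n c (wV a))"
      by (rule FV_A_integral[where c=c and a=a, OF less.prems(3) ck less.prems(5)])
    finally show ?thesis .
  next
    case False
    show ?thesis
    proof (cases "k < n")
      case True
      have "RegR E v k n a = RegR E v (Suc k) n (a(Suc k := a k + a (Suc k)))"
        using RegR_B[OF less.prems(2) True] False less.prems(5) by auto
      also have "emeasure (Pi\<^sub>M E (\<lambda>_. lborel)) \<dots> = ennreal (Sw (Suc k) n c (wV (a(Suc k := a k + a (Suc k)))))"
      proof (rule less.hyps)
        show "\<forall>e\<in>E. v e \<in> {Suc k..n}" using less.prems(2) False by (auto simp: Suc_le_eq le_less)
        show "\<forall>i. 0 \<le> (a(Suc k := a k + a (Suc k))) i" using less.prems(5) by simp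
      qed (use less.prems True in auto)
      also have "Sw (Suc k) n c (wV (a(Suc k := a k + a (Suc k)))) = Sw k n c (wV a)"
      proof (rule FV_B[symmetric, OF True])
        have "{e\<in>E. v e = k} = {}" using False by auto
        thus "c k = 0" using less.prems by auto
      qed
      finally show ?thesis .
    next
      case kn: False
      hence k: "k = n" using less.prems by simp
      hence E: "E = {}" using less.prems(2) False by auto
      have "c n = 0" using less.prems k E by auto
      thus ?thesis using k E RegR_C[of a n v] less.prems(5) by (simp add: Sw_base wV_def)
    qed
  qed
qed

definition Lm :: "nat \<Rightarrow> (nat \<Rightarrow> nat) \<Rightarrow> (nat \<times> nat) list" where
  "Lm n c = concat (map (\<lambda>i. replicate (c i) (i, n+1)) [1..<n+1])"

lemma sum_list_upt_sum: "sum_list (map f [1..<n+1]) = sum f {1..n}"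
proof -
  have "sum_list (map f [1..<n+1]) = sum f (set [1..<n+1])" by (rule sum_list_distinct_conv_sum_set) simp
  also have "set [1..<n+1] = {1..n}" by (simp only: set_upt) auto
  finally show ?thesis .
qed

lemma length_Lm: "length (Lm n c) = sum c {1..n}"
  unfolding Lm_def by (simp only: length_concat map_map comp_def length_replicate sum_list_upt_sum)

lemma Pi_graph_eq: "Pi_graph n c = map (\<lambda>i. (i, Suc i)) [1..<n+1] @ Lm n c"
  unfolding Pi_graph_def Lm_def by simp

lemma length_G: "length (Pi_graph n c) = n + sum c {1..n}"
  unfolding Pi_graph_eq by (simp add: length_Lm)

lemma G_path: "p < n \<Longrightarrow> Pi_graph n c ! p = (Suc p, Suc (Suc p))"
  unfolding Pi_graph_eq by (simp add: nth_append del: upt_Suc)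

lemma set_Lm: "x \<in> set (Lm n c) \<Longrightarrow> snd x = n + 1 \<and> fst x \<in> {1..n}"
  unfolding Lm_def by (auto split: if_splits)

lemma G_multi: "n \<le> e \<Longrightarrow> e < length (Pi_graph n c) \<Longrightarrow> Pi_graph n c ! e = Lm n c ! (e - n) \<and> snd (Pi_graph n c ! e) = n + 1 \<and> fst (Pi_graph n c ! e) \<in> {1..n}"
  using set_Lm[of "Lm n c ! (e - n)" n c] unfolding Pi_graph_eq
  by (auto simp: nth_append length_G length_Lm Pi_graph_eq[symmetric] intro: nth_mem)

lemma card_Lm: "i \<in> {1..n} \<Longrightarrow> card {p. p < length (Lm n c) \<and> fst (Lm n c ! p) = i} = c i"
proof -
  assume i: "i \<in> {1..n}"
  have "card {p. p < length (Lm n c) \<and> fst (Lm n c ! p) = i} = length (filter (\<lambda>x. fst x = i) (Lm n c))"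
    by (simp add: length_filter_conv_card)
  also have "\<dots> = sum_list (map (\<lambda>j. if j = i then c j else 0) [1..<n+1])"
    unfolding Lm_def by (simp add: filter_concat length_concat comp_def filter_replicate del: upt_Suc) (intro arg_cong[where f=sum_list] map_cong, auto)
  also have "\<dots> = sum (\<lambda>j. if j = i then c j else 0) {1..n}" by (rule sum_list_upt_sum)
  also have "\<dots> = c i" using i by simp
  finally show ?thesis .
qed

lemma card_S_v:
  assumes "i \<in> {1..n}"
  shows "card {e \<in> {n..<n + sum c {1..n}}. fst (Pi_graph n c ! e) = i} = c i"
proof -
  have "{e \<in> {n..<n + sum c {1..n}}. fst (Pi_graph n c ! e) = i} = (\<lambda>p. p + n) ` {p. p < length (Lm n c) \<and> fst (Lm n c ! p) = i}"
  proof safe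
    fix e assume e: "e \<in> {n..<n + sum c {1..n}}" "i = fst (Pi_graph n c ! e)"
    then have "Pi_graph n c ! e = Lm n c ! (e - n)" using G_multi[of n e c] by (simp add: length_G)
    then show "e \<in> (\<lambda>p. p + n) ` {p. p < length (Lm n c) \<and> fst (Lm n c ! p) = fst (Pi_graph n c ! e)}"
      using e by (intro image_eqI[of _ _ "e - n"]) (auto simp: length_Lm)
  next
    fix p assume p: "p < length (Lm n c)" "i = fst (Lm n c ! p)"
    show "p + n \<in> {n..<n + sum c {1..n}}" using p by (simp add: length_Lm)
    have "Pi_graph n c ! (p + n) = Lm n c ! p" using G_multi[of n "p+n" c] p by (simp add: length_G length_Lm)
    thus "fst (Pi_graph n c ! (p + n)) = fst (Lm n c ! p)" by simp
  qed
  also have "card \<dots> = card {p. p < length (Lm n c) \<and> fst (Lm n c ! p) = i}" by (intro card_image) (auto simp: inj_on_def)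
  finally show ?thesis using card_Lm[OF assms] by simp
qed

lemma Out_set:
  assumes "i \<in> {1..n}"
  shows "{k. k < length (Pi_graph n c) \<and> fst (Pi_graph n c ! k) = i}
       = insert (i - 1) {e \<in> {n..<n + sum c {1..n}}. fst (Pi_graph n c ! e) = i}"
proof -
  have "k < length (Pi_graph n c) \<and> fst (Pi_graph n c ! k) = i \<longleftrightarrow>
        k = i - 1 \<or> (k \<in> {n..<n + sum c {1..n}} \<and> fst (Pi_graph n c ! k) = i)" for k
  proof (cases "k < n")
    case True thus ?thesis using assms by (auto simp: G_path length_G)
  next
    case False thus ?thesis using assms by (auto simp: length_G)
  qed
  thus ?thesis by auto
qed

lemma In_set:
  assumes "i \<in> {1..n}"
  shows "{k. k < length (Pi_graph n c) \<and> snd (Pi_graph n c ! k) = i} = (if 2 \<le> i then {i - 2} else {})"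
proof -
  have "k < length (Pi_graph n c) \<and> snd (Pi_graph n c ! k) = i \<longleftrightarrow> 2 \<le> i \<and> k = i - 2" for k
  proof (cases "k < n")
    case True thus ?thesis using assms by (auto simp: G_path length_G)
  next
    case False
    show ?thesis
    proof
      assume "k < length (Pi_graph n c) \<and> snd (Pi_graph n c ! k) = i"
      then show "2 \<le> i \<and> k = i - 2" using G_multi[of n k c] False assms by auto
    next
      assume "2 \<le> i \<and> k = i - 2" then show "k < length (Pi_graph n c) \<and> snd (Pi_graph n c ! k) = i"
        using False assms by auto
    qed
  qed
  thus ?thesis by auto
qed

definition SS :: "nat \<Rightarrow> (nat \<Rightarrow> nat) \<Rightarrow> nat set" where
  "SS n c = {n..<n + sum c {1..n}}"
definition vv :: "nat \<Rightarrow> (nat \<Rightarrow> nat) \<Rightarrow> nat \<Rightarrow> nat" where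
  "vv n c e = fst (Pi_graph n c ! e)"
definition Tsum :: "nat \<Rightarrow> (nat \<Rightarrow> nat) \<Rightarrow> (nat \<Rightarrow> 'a::comm_monoid_add) \<Rightarrow> nat \<Rightarrow> 'a" where
  "Tsum n c y m = sum y {e \<in> SS n c. vv n c e \<le> m}"
definition Ysum :: "nat \<Rightarrow> (nat \<Rightarrow> nat) \<Rightarrow> (nat \<Rightarrow> 'a::comm_monoid_add) \<Rightarrow> nat \<Rightarrow> 'a" where
  "Ysum n c y m = sum y {e \<in> SS n c. vv n c e = m}"
definition extR :: "nat \<Rightarrow> (nat \<Rightarrow> nat) \<Rightarrow> (nat \<Rightarrow> real) \<Rightarrow> (nat \<Rightarrow> real) \<Rightarrow> nat \<Rightarrow> real" where
  "extR n c a y k = (if k \<in> SS n c then y k else if k < n then sum a {1..Suc k} - Tsum n c y (Suc k) else 0)"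

lemma vv_range: "e \<in> SS n c \<Longrightarrow> vv n c e \<in> {1..n}"
  unfolding SS_def vv_def using G_multi[of n e c] by (auto simp: length_G)

lemma finite_SS: "finite (SS n c)" unfolding SS_def by simp

lemma Tsum_0: "Tsum n c y 0 = 0"
proof -
  have E: "{e \<in> SS n c. vv n c e \<le> 0} = {}" using vv_range[of _ n c] by fastforce
  show ?thesis unfolding Tsum_def E by simp
qed

lemma Tsum_Suc: "Tsum n c y (Suc m) = Tsum n c y m + Ysum n c y (Suc m)"
proof -
  have E: "{e \<in> SS n c. vv n c e \<le> Suc m} = {e \<in> SS n c. vv n c e \<le> m} \<union> {e \<in> SS n c. vv n c e = Suc m}" by auto
  show ?thesis unfolding Tsum_def Ysum_def E by (rule sum.union_disjoint) (auto simp: finite_SS)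
qed

lemma Tsum_cong: "(\<And>e. e \<in> SS n c \<Longrightarrow> y e = z e) \<Longrightarrow> Tsum n c y m = Tsum n c z m"
  unfolding Tsum_def by (intro sum.cong) auto

lemma Ysum_cong: "(\<And>e. e \<in> SS n c \<Longrightarrow> y e = z e) \<Longrightarrow> Ysum n c y m = Ysum n c z m"
  unfolding Ysum_def by (intro sum.cong) auto

lemma conservation_eq:
  fixes g :: "nat \<Rightarrow> 'a::ab_group_add"
  assumes i: "i \<in> {1..n}"
  shows "(\<Sum>k\<in>{k. k < length (Pi_graph n c) \<and> fst (Pi_graph n c ! k) = i}. g k)
         - (\<Sum>k\<in>{k. k < length (Pi_graph n c) \<and> snd (Pi_graph n c ! k) = i}. g k)
       = g (i - 1) + Ysum n c g i - (if 2 \<le> i then g (i - 2) else 0)"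
proof -
  have "i - 1 \<notin> {e \<in> {n..<n + sum c {1..n}}. fst (Pi_graph n c ! e) = i}" using i by auto
  then have "(\<Sum>k\<in>{k. k < length (Pi_graph n c) \<and> fst (Pi_graph n c ! k) = i}. g k) = g (i - 1) + Ysum n c g i"
    unfolding Out_set[OF i] Ysum_def SS_def vv_def by (simp add: sum.insert)
  moreover have "(\<Sum>k\<in>{k. k < length (Pi_graph n c) \<and> snd (Pi_graph n c ! k) = i}. g k) = (if 2 \<le> i then g (i - 2) else 0)"
    unfolding In_set[OF i] by simp
  ultimately show ?thesis by simp
qed

lemma FP_iff:
  "g \<in> flow_polytope n (Pi_graph n c) a \<longleftrightarrow>
    (\<forall>k. n + sum c {1..n} \<le> k \<longrightarrow> g k = 0) \<and> (\<forall>k<n + sum c {1..n}. 0 \<le> g k) \<and>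
    (\<forall>i\<in>{1..n}. g (i - 1) + Ysum n c g i - (if 2 \<le> i then g (i - 2) else 0) = a i)"
  unfolding flow_polytope_def using conservation_eq[of _ n g c] by (simp add: length_G)

lemma FP_tele:
  assumes "g \<in> flow_polytope n (Pi_graph n c) a"
  shows "m \<in> {1..n} \<Longrightarrow> g (m - 1) = sum a {1..m} - Tsum n c g m"
proof (induction m)
  case 0 thus ?case by simp
next
  case (Suc m)
  have "\<forall>i\<in>{1..n}. g (i - 1) + Ysum n c g i - (if 2 \<le> i then g (i - 2) else 0) = a i"
    using assms unfolding FP_iff by blast
  from bspec[OF this Suc.prems]
  have X: "g (Suc m - 1) + Ysum n c g (Suc m) - (if 2 \<le> Suc m then g (Suc m - 2) else 0) = a (Suc m)" .
  have e: "Suc m - 2 = m - 1" by arith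
  have cons: "g m + Ysum n c g (Suc m) - (if 2 \<le> Suc m then g (m - 1) else 0) = a (Suc m)"
    using X unfolding e by simp
  show ?case
  proof (cases "m = 0")
    case True thus ?thesis using cons by (simp add: Tsum_Suc Tsum_0)
  next
    case False
    then have "g (m - 1) = sum a {1..m} - Tsum n c g m" using Suc by simp
    moreover have "sum a {1..Suc m} = sum a {1..m} + a (Suc m)" by simp
    ultimately show ?thesis using cons False by (simp add: Tsum_Suc algebra_simps)
  qed
qed

lemma FP_ext:
  assumes nn: "\<forall>e\<in>SS n c. 0 \<le> y e" and cons: "\<forall>m\<in>{1..n}. Tsum n c y m \<le> sum a {1..m}"
  shows "extR n c a y \<in> flow_polytope n (Pi_graph n c) a"
  unfolding FP_iff
proof (intro conjI allI impI ballI)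
  let ?g = "extR n c a y"
  have T: "Tsum n c ?g m = Tsum n c y m" for m by (rule Tsum_cong) (simp add: extR_def)
  have Y: "Ysum n c ?g m = Ysum n c y m" for m by (rule Ysum_cong) (simp add: extR_def)
  fix k
  show "n + sum c {1..n} \<le> k \<Longrightarrow> ?g k = 0" by (simp add: extR_def SS_def)
  show "k < n + sum c {1..n} \<Longrightarrow> 0 \<le> ?g k"
  proof -
    assume k: "k < n + sum c {1..n}"
    show ?thesis
    proof (cases "k \<in> SS n c")
      case True thus ?thesis using nn by (simp add: extR_def)
    next
      case False
      then have "k < n" using k by (simp add: SS_def)
      then have "Suc k \<in> {1..n}" by simp
      from bspec[OF cons this] have "Tsum n c y (Suc k) \<le> sum a {1..Suc k}" .
      thus ?thesis using False \<open>k < n\<close> by (simp add: extR_def)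
    qed
  qed
next
  let ?g = "extR n c a y"
  have T: "Tsum n c ?g m = Tsum n c y m" for m by (rule Tsum_cong) (simp add: extR_def)
  have Y: "Ysum n c ?g m = Ysum n c y m" for m by (rule Ysum_cong) (simp add: extR_def)
  fix i assume i: "i \<in> {1..n}"
  have "i - 1 < n" "i - 1 \<notin> SS n c" "Suc (i - 1) = i" using i by (auto simp: SS_def)
  then have g1: "?g (i - 1) = sum a {1..i} - Tsum n c y i"
    by (simp add: extR_def)
  show "?g (i - 1) + Ysum n c ?g i - (if 2 \<le> i then ?g (i - 2) else 0) = a i"
  proof (cases "2 \<le> i")
    case True
    then obtain m where m: "i = Suc (Suc m)" by (metis add_2_eq_Suc le_Suc_ex)
    have "i - 2 < n" "i - 2 \<notin> SS n c" "Suc (i - 2) = Suc m" using i m by (auto simp: SS_def)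
    then have g2: "?g (i - 2) = sum a {1..Suc m} - Tsum n c y (Suc m)"
      by (simp add: extR_def)
    show ?thesis using g1 g2 Y m True by (simp add: Tsum_Suc algebra_simps)
  next
    case False
    then have "i = 1" using i by simp
    thus ?thesis using g1 Y by (simp add: Tsum_Suc Tsum_0)
  qed
qed

lemma Dc_dom: "Dc 1 n c = dom_compositions n c"
  unfolding Dc_def dom_compositions_def by simp

lemma restrict_FP:
  fixes a :: "nat \<Rightarrow> real"
  shows "(\<lambda>f. restrict f (SS n c)) ` flow_polytope n (Pi_graph n c) a = RegR (SS n c) (vv n c) 1 n a"
proof safe
  fix g assume g: "g \<in> flow_polytope n (Pi_graph n c) a"
  have nn: "\<forall>k<n + sum c {1..n}. 0 \<le> g k" using g unfolding FP_iff by blast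
  show "restrict g (SS n c) \<in> RegR (SS n c) (vv n c) 1 n a"
    unfolding RegR_def mem_Collect_eq
  proof (intro conjI ballI)
    show "restrict g (SS n c) \<in> SS n c \<rightarrow>\<^sub>E UNIV" by simp
    fix e assume "e \<in> SS n c" thus "0 \<le> restrict g (SS n c) e" using nn by (auto simp: SS_def)
  next
    fix m assume m: "m \<in> {1..n}"
    have "sum (restrict g (SS n c)) {e \<in> SS n c. vv n c e \<le> m} = Tsum n c g m"
      unfolding Tsum_def by (intro sum.cong) auto
    moreover have "g (m - 1) = sum a {1..m} - Tsum n c g m" using FP_tele[OF g m] .
    moreover have "0 \<le> g (m - 1)" using nn m by auto
    ultimately show "sum (restrict g (SS n c)) {e \<in> SS n c. vv n c e \<le> m} \<le> sum a {1..m}" by simp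
  qed
next
  fix y assume y: "y \<in> RegR (SS n c) (vv n c) 1 n a"
  have yE: "y \<in> SS n c \<rightarrow>\<^sub>E UNIV" and nn: "\<forall>e\<in>SS n c. 0 \<le> y e"
    and cons: "\<forall>m\<in>{1..n}. sum y {e \<in> SS n c. vv n c e \<le> m} \<le> sum a {1..m}"
    using y unfolding RegR_def by blast+
  have "extR n c a y \<in> flow_polytope n (Pi_graph n c) a"
    using nn cons by (intro FP_ext) (auto simp: Tsum_def)
  moreover have "restrict (extR n c a y) (SS n c) = y"
    using yE by (auto simp: fun_eq_iff extR_def PiE_def extensional_def)
  ultimately show "y \<in> (\<lambda>f. restrict f (SS n c)) ` flow_polytope n (Pi_graph n c) a"
    by (metis image_eqI)
qed

lemma Sw_nonneg: "(\<forall>i. 0 \<le> a i) \<Longrightarrow> 0 \<le> Sw k n c (wV a)"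
  unfolding Sw_def wV_def by (intro sum_nonneg prod_nonneg divide_nonneg_nonneg zero_le_power) auto

lemma volume_part:
  assumes "n \<ge> 1"
  shows "vol_Pi_flow n c (\<lambda>i. real (a i))
           = (\<Sum>j\<in>dom_compositions n c.
                fact (sum c {1..n}) / (\<Prod>i\<in>{1..n}. fact (j i)) * (\<Prod>i\<in>{1..n}. real (a i) ^ j i))"
proof -
  let ?a = "\<lambda>i. real (a i)"
  have cardS: "card {n..<n + sum c {1..n}} = sum c {1..n}" by simp
  have "measure (Pi\<^sub>M (SS n c) (\<lambda>_. lborel)) (RegR (SS n c) (vv n c) 1 n ?a) = Sw 1 n c (wV ?a)"
  proof -
    have "emeasure (Pi\<^sub>M (SS n c) (\<lambda>_. lborel)) (RegR (SS n c) (vv n c) 1 n ?a) = ennreal (Sw 1 n c (wV ?a))"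
    proof (rule vol_gen)
      show "finite (SS n c)" by (rule finite_SS)
      show "\<forall>e\<in>SS n c. vv n c e \<in> {1..n}" using vv_range by blast
      show "1 \<le> n" by fact
      show "\<forall>i\<in>{1..n}. c i = card {e \<in> SS n c. vv n c e = i}"
        using card_S_v[of _ n c] unfolding SS_def vv_def by auto
      show "\<forall>i. 0 \<le> ?a i" by simp
    qed
    thus ?thesis unfolding measure_def using Sw_nonneg[of ?a] by simp
  qed
  then have "vol_Pi_flow n c ?a = fact (sum c {1..n}) * Sw 1 n c (wV ?a)"
    unfolding vol_Pi_flow_def norm_vol_proj_def cardS
    using restrict_FP[of n c ?a] unfolding SS_def by simp
  also have "\<dots> = (\<Sum>j\<in>dom_compositions n c.
                fact (sum c {1..n}) / (\<Prod>i\<in>{1..n}. fact (j i)) * (\<Prod>i\<in>{1..n}. real (a i) ^ j i))"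
    unfolding Sw_def Dc_dom wV_def sum_distrib_left
    by (intro sum.cong refl) (simp add: prod_dividef)
  finally show ?thesis .
qed

definition Kset :: "nat \<Rightarrow> (nat \<Rightarrow> nat) \<Rightarrow> (nat \<Rightarrow> nat) \<Rightarrow> (nat \<Rightarrow> nat) set" where
  "Kset n c a = {f :: nat \<Rightarrow> nat. (\<forall>k. length (Pi_graph n c) \<le> k \<longrightarrow> f k = 0) \<and>
     (\<forall>i\<in>{1..n}. int (\<Sum>k\<in>{k. k < length (Pi_graph n c) \<and> fst (Pi_graph n c ! k) = i}. f k)
                 - int (\<Sum>k\<in>{k. k < length (Pi_graph n c) \<and> snd (Pi_graph n c ! k) = i}. f k) = int (a i))}"

lemma kostant_Kset: "kostant n (Pi_graph n c) (\<lambda>i. int (a i)) = card (Kset n c a)"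
  unfolding kostant_def Kset_def by simp

lemma int_real_eq: "(int X - int Y = int Z) \<longleftrightarrow> (real X - real Y = real Z)"
proof -
  have "(int X - int Y = int Z) \<longleftrightarrow> X = Y + Z" by arith
  moreover have "(real X - real Y = real Z) \<longleftrightarrow> real X = real (Y + Z)" by (simp add: algebra_simps)
  ultimately show ?thesis by (simp only: of_nat_eq_iff)
qed

lemma Kset_iff: "f \<in> Kset n c a \<longleftrightarrow> (\<lambda>k. real (f k)) \<in> flow_polytope n (Pi_graph n c) (\<lambda>i. real (a i))"
  unfolding Kset_def flow_polytope_def mem_Collect_eq int_real_eq of_nat_sum[symmetric] by simp

lemma Kset_tele:
  assumes "f \<in> Kset n c a" "m \<in> {1..n}"
  shows "real (f (m - 1)) = real (sum a {1..m}) - real (Tsum n c f m)"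
  using FP_tele[OF Kset_iff[THEN iffD1, OF assms(1)] assms(2)] by (simp add: Tsum_def)

lemma Kset_bij:
  assumes "n \<ge> 1"
  shows "bij_betw (\<lambda>f. restrict f (SS n c)) (Kset n c a) (RegN (SS n c) (vv n c) 1 n a)"
proof (intro bij_betwI')
  fix f f' assume f: "f \<in> Kset n c a" and f': "f' \<in> Kset n c a"
  show "(restrict f (SS n c) = restrict f' (SS n c)) = (f = f')"
  proof
    assume eq: "restrict f (SS n c) = restrict f' (SS n c)"
    have onS: "f e = f' e" if "e \<in> SS n c" for e using eq that by (metis restrict_apply')
    have T: "Tsum n c f m = Tsum n c f' m" for m by (rule Tsum_cong) (rule onS)
    show "f = f'"
    proof
      fix k
      show "f k = f' k"
      proof (cases "k \<in> SS n c")
        case True thus ?thesis by (rule onS)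
      next
        case False
        show ?thesis
        proof (cases "k < n")
          case True
          then have m: "Suc k \<in> {1..n}" by simp
          have "real (f k) = real (f' k)" using Kset_tele[OF f m] Kset_tele[OF f' m] T by simp
          thus ?thesis by simp
        next
          case False
          then have "length (Pi_graph n c) \<le> k" using \<open>k \<notin> SS n c\<close> by (simp add: SS_def length_G)
          thus ?thesis using f f' unfolding Kset_def by simp
        qed
      qed
    qed
  qed simp
next
  fix f assume f: "f \<in> Kset n c a"
  show "restrict f (SS n c) \<in> RegN (SS n c) (vv n c) 1 n a"
    unfolding RegN_def mem_Collect_eq
  proof (intro conjI ballI)
    show "restrict f (SS n c) \<in> SS n c \<rightarrow>\<^sub>E UNIV" by simp
    fix m assume m: "m \<in> {1..n}"
    have "sum (restrict f (SS n c)) {e \<in> SS n c. vv n c e \<le> m} = Tsum n c f m"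
      unfolding Tsum_def by (intro sum.cong) auto
    moreover have "real (Tsum n c f m) \<le> real (sum a {1..m})"
      using Kset_tele[OF f m] of_nat_0_le_iff[of "f (m-1)"] by linarith
    hence "Tsum n c f m \<le> sum a {1..m}" by (simp only: of_nat_le_iff)
    ultimately show "sum (restrict f (SS n c)) {e \<in> SS n c. vv n c e \<le> m} \<le> sum a {1..m}" by simp
  qed
next
  fix y assume y: "y \<in> RegN (SS n c) (vv n c) 1 n a"
  have yE: "y \<in> SS n c \<rightarrow>\<^sub>E UNIV"
    and cons: "\<forall>m\<in>{1..n}. Tsum n c y m \<le> sum a {1..m}"
    using y unfolding RegN_def Tsum_def by blast+
  define f where "f k = (if k \<in> SS n c then y k else if k < n then sum a {1..Suc k} - Tsum n c y (Suc k) else 0)" for k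
  let ?yr = "\<lambda>k. real (y k)"
  have Tr: "Tsum n c ?yr m = real (Tsum n c y m)" for m unfolding Tsum_def by simp
  have "(\<lambda>k. real (f k)) = extR n c (\<lambda>i. real (a i)) ?yr"
  proof
    fix k
    show "real (f k) = extR n c (\<lambda>i. real (a i)) ?yr k"
    proof (cases "k \<notin> SS n c \<and> k < n")
      case True
      then have "Suc k \<in> {1..n}" by simp
      from bspec[OF cons this] have "Tsum n c y (Suc k) \<le> sum a {1..Suc k}" .
      then show ?thesis using True unfolding f_def extR_def Tr by (simp add: of_nat_diff)
    next
      case False thus ?thesis unfolding f_def extR_def by auto
    qed
  qed
  moreover have "extR n c (\<lambda>i. real (a i)) ?yr \<in> flow_polytope n (Pi_graph n c) (\<lambda>i. real (a i))"
  proof (rule FP_ext)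
    show "\<forall>e\<in>SS n c. 0 \<le> ?yr e" by simp
    show "\<forall>m\<in>{1..n}. Tsum n c ?yr m \<le> sum (\<lambda>i. real (a i)) {1..m}"
      using cons unfolding Tr by (simp flip: of_nat_sum)
  qed
  ultimately have "f \<in> Kset n c a" unfolding Kset_iff by simp
  moreover have "restrict f (SS n c) = y" using yE by (auto simp: fun_eq_iff f_def PiE_def extensional_def)
  ultimately show "\<exists>f\<in>Kset n c a. y = restrict f (SS n c)" by metis
qed

lemma kostant_part:
  assumes "n \<ge> 1"
  shows "kostant n (Pi_graph n c) (\<lambda>i. int (a i)) = (\<Sum>j\<in>dom_compositions n c. \<Prod>i\<in>{1..n}. (a i + c i) choose j i)"
    and "kostant n (Pi_graph n c) (\<lambda>i. int (a i)) = (\<Sum>j\<in>dom_compositions n c.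
                ((a 1 + j 1) choose j 1) * (\<Prod>i\<in>{2..n}. (a i + j i - 1) choose j i))"
proof -
  have K: "kostant n (Pi_graph n c) (\<lambda>i. int (a i)) = card (RegN (SS n c) (vv n c) 1 n a)"
    unfolding kostant_Kset using bij_betw_same_card[OF Kset_bij[OF assms]] .
  have prem: "finite (SS n c)" "\<forall>e\<in>SS n c. vv n c e \<in> {1..n}" "1 \<le> n"
      "\<forall>i\<in>{1..n}. c i = card {e \<in> SS n c. vv n c e = i}"
    using finite_SS vv_range assms card_S_v[of _ n c] unfolding SS_def vv_def by auto
  show "kostant n (Pi_graph n c) (\<lambda>i. int (a i)) = (\<Sum>j\<in>dom_compositions n c. \<Prod>i\<in>{1..n}. (a i + c i) choose j i)"
    unfolding K count_R2[OF prem] Sw_def Dc_dom w2_def ..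
  have "kostant n (Pi_graph n c) (\<lambda>i. int (a i)) = Sw 1 n c (w3 1 a)"
    unfolding K count_R3[OF prem] ..
  also have "\<dots> = (\<Sum>j\<in>dom_compositions n c.
                ((a 1 + j 1) choose j 1) * (\<Prod>i\<in>{2..n}. (a i + j i - 1) choose j i))"
    unfolding Sw_split[OF assms] Dc_dom
    by (intro sum.cong refl arg_cong2[where f="(*)"] prod.cong) (auto simp: w3_def numeral_2_eq_2)
  finally show "kostant n (Pi_graph n c) (\<lambda>i. int (a i)) = (\<Sum>j\<in>dom_compositions n c.
                ((a 1 + j 1) choose j 1) * (\<Prod>i\<in>{2..n}. (a i + j i - 1) choose j i))" .
qed

theorem corollary6p16:
  fixes n :: nat and a c :: "nat \<Rightarrow> nat"
  assumes "n \<ge> 1"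
  shows "(vol_Pi_flow n c (\<lambda>i. real (a i))
           = (\<Sum>j\<in>dom_compositions n c.
                fact (sum c {1..n}) / (\<Prod>i\<in>{1..n}. fact (j i)) * (\<Prod>i\<in>{1..n}. real (a i) ^ j i))) \<and>
         (kostant n (Pi_graph n c) (\<lambda>i. int (a i))
           = (\<Sum>j\<in>dom_compositions n c. \<Prod>i\<in>{1..n}. (a i + c i) choose j i)) \<and>
         (kostant n (Pi_graph n c) (\<lambda>i. int (a i))
           = (\<Sum>j\<in>dom_compositions n c.
                ((a 1 + j 1) choose j 1) * (\<Prod>i\<in>{2..n}. (a i + j i - 1) choose j i)))"
  using volume_part[OF assms] kostant_part[OF assms] by blast


end
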